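(* Let $p,q,r$ be idempotents in a unital ring $A$ with $p\perp r$ and $q\perp r$. If $\operatorname{sr}((p+r)A(q+r))=1$, then $\operatorname{sr}(pAq)=1$.
   Context: Idempotents $e,f$ are orthogonal, $e\perp f$, if $ef=fe=0$. For idempotents $p,q$ in a unital ring $A$, $\operatorname{sr}(pAq)=1$ means: whenever $a\in pAq$, $x\in qAp$, $b\in pAp$ satisfy $ax+b=p$, there exist $y\in pAq$, $z\in qAp$ with $(a+by)z=p$. *)

theory Defs
  imports Main
begin

definition idempotent :: "'a::ring_1 \<Rightarrow> bool" where
  "idempotent e \<longleftrightarrow> e * e = e"

definition orth :: "'a::ring_1 \<Rightarrow> 'a \<Rightarrow> bool" where
  "orth e f \<longleftrightarrow> e * f = 0 \<and> f * e = 0"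

definition corner :: "'a::ring_1 \<Rightarrow> 'a \<Rightarrow> 'a set" where
  "corner p q = {p * a * q | a. True}"

definition sr_one :: "'a::ring_1 \<Rightarrow> 'a \<Rightarrow> bool" where
  "sr_one p q \<longleftrightarrow>
     (\<forall>a\<in>corner p q. \<forall>x\<in>corner q p. \<forall>b\<in>corner p p.
        a * x + b = p \<longrightarrow>
        (\<exists>y\<in>corner p q. \<exists>z\<in>corner q p. (a + b * y) * z = p))"

end

theory Submission
  imports Defs
begin

theorem lemma4:
  fixes p q r :: "'a::ring_1"
  assumes "idempotent p" and "idempotent q" and "idempotent r"
    and "orth p r" and "orth q r"
    and "sr_one (p + r) (q + r)"
  shows "sr_one p q"
proof -
  have pp: "p*p = p" and qq: "q*q = q" and rr: "r*r = r"
    and pr: "p*r = 0" and rp: "r*p = 0" and qr: "q*r = 0" and rq: "r*q = 0"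
    using assms unfolding idempotent_def orth_def by auto
  have pp': "p*(p*x) = p*x" and qq': "q*(q*x) = q*x" and rr': "r*(r*x) = r*x"
    and pr': "p*(r*x) = 0" and rp': "r*(p*x) = 0" and qr': "q*(r*x) = 0" and rq': "r*(q*x) = 0"
    for x
    by (simp_all add: mult.assoc[symmetric] pp qq rr pr rp qr rq)
  note S = pp qq rr pr rp qr rq pp' qq' rr' pr' rp' qr' rq' mult.assoc distrib_left distrib_right
  show ?thesis
    unfolding sr_one_def
  proof (intro ballI impI)
    fix a x b
    assume "a \<in> corner p q" "x \<in> corner q p" "b \<in> corner p p" and eq: "a * x + b = p"
    then obtain a0 x0 b0 where A: "a = p*a0*q" and X: "x = q*x0*p" and B: "b = p*b0*p"
      unfolding corner_def by auto
    have a'c: "a + r \<in> corner (p+r) (q+r)" unfolding corner_def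
      by (rule CollectI, rule exI[of _ "a + r"]) (simp add: A S)
    have x'c: "x + r \<in> corner (q+r) (p+r)" unfolding corner_def
      by (rule CollectI, rule exI[of _ "x + r"]) (simp add: X S)
    have b'c: "b \<in> corner (p+r) (p+r)" unfolding corner_def
      by (rule CollectI, rule exI[of _ "b"]) (simp add: B S)
    have "(a + r) * (x + r) + b = p + r"
      using eq by (simp add: A X B S)
    then obtain y' z' where y'c: "y' \<in> corner (p+r) (q+r)" and z'c: "z' \<in> corner (q+r) (p+r)"
      and e: "(a + r + b * y') * z' = p + r"
      using assms(6) a'c x'c b'c unfolding sr_one_def by blast
    obtain c d where Y: "y' = (p+r)*c*(q+r)" and Z: "z' = (q+r)*d*(p+r)"
      using y'c z'c unfolding corner_def by auto
    have "r * ((a + r + b * y') * z') * p = r * (p + r) * p" using e by simp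
    then have rz: "r * z' * p = 0" by (simp add: A B S)
    have "p * ((a + r + b * y') * z') * p = p * (p + r) * p" using e by simp
    then have e2: "a * z' * p + b * y' * z' * p = p" by (simp add: A B S)
    have zq: "z' * p = q * z' * p"
    proof -
      have "z' * p = (q + r) * z' * p" by (simp add: Z S)
      also have "\<dots> = q * z' * p" using rz by (simp add: distrib_right)
      finally show ?thesis .
    qed
    have yq: "y' * q = (p + r) * y' * q" by (simp add: Y S)
    show "\<exists>y\<in>corner p q. \<exists>z\<in>corner q p. (a + b * y) * z = p"
    proof (intro bexI)
      show "p * y' * q \<in> corner p q" unfolding corner_def by auto
      show "q * z' * p \<in> corner q p" unfolding corner_def by auto
      have "a * z' * p = a * (q * z' * p)" using zq by (simp add: mult.assoc)
      moreover have "b * y' * z' * p = b * (p * y' * q) * (q * z' * p)"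
      proof -
        have "b * y' * z' * p = b * y' * (q * z' * p)" using zq by (simp add: mult.assoc)
        also have "\<dots> = b * y' * q * (q * z' * p)" by (simp add: mult.assoc qq')
        also have "\<dots> = b * ((p + r) * y' * q) * (q * z' * p)" using yq by (simp add: mult.assoc)
        also have "\<dots> = b * (p * y' * q) * (q * z' * p)" by (simp add: B S)
        finally show ?thesis .
      qed
      ultimately show "(a + b * (p * y' * q)) * (q * z' * p) = p"
        using e2 by (simp add: distrib_right)
    qed
  qed
qed

end
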